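(* Let $n\ge4$ and let $\mathcal{U}$ be a non-degenerate $n$-gon with $\operatorname{Len}(\mathcal{U})=1$ whose interior angles satisfy $\frac{\pi}{2}\le\alpha_i<\pi$. Then any corresponding folded ribbon unknot $\mathcal{U}_{w,F}$ has ribbon width $w\le \frac{1}{n\cot(\frac{\pi}{n})}$, and $w$ is maximized when $\mathcal{U}$ is equiangular.
   Context: Non-degenerate $n$-gon: side lengths nonzero, interior angles not equal to $\pi$. For width $w>0$, the folded ribbon $\mathcal{U}_{w,F}$ is a flat strip of width $w$ centred on $\mathcal{U}$ (boundary parallel to and at distance $w/2$ from each edge), folded at each vertex along a fold line through the vertex perpendicular to the bisector of the angle there; it must be a piecewise-linear immersion of an annulus or Möbius band into the plane whose only singularities are the pairwise disjoint fold lines, with consistent crossing information. $F$ is the folding information (which layer lies on top at each fold). *)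

theory Defs
  imports "HOL-Analysis.Analysis"
begin

text \<open>An n-gon is given by its vertices v 0, ..., v (n-1) in the plane (modelled as
  complex numbers); indices are taken cyclically.\<close>

definition nxt :: "nat \<Rightarrow> nat \<Rightarrow> nat" where
  "nxt n i = Suc i mod n"

definition prv :: "nat \<Rightarrow> nat \<Rightarrow> nat" where
  "prv n i = (i + n - 1) mod n"

definition edge_seg :: "nat \<Rightarrow> (nat \<Rightarrow> complex) \<Rightarrow> nat \<Rightarrow> complex set" where
  "edge_seg n v i = closed_segment (v i) (v (nxt n i))"

definition simple_polygon :: "nat \<Rightarrow> (nat \<Rightarrow> complex) \<Rightarrow> bool" where
  "simple_polygon n v \<longleftrightarrow> 3 \<le> n \<and>
     (\<forall>i<n. \<forall>j<n. i \<noteq> j \<longrightarrow>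
        (if j = nxt n i then edge_seg n v i \<inter> edge_seg n v j = {v j}
         else if i = nxt n j then edge_seg n v i \<inter> edge_seg n v j = {v i}
         else edge_seg n v i \<inter> edge_seg n v j = {}))"

text \<open>Signed (shoelace) area: positive iff the polygon is oriented counterclockwise.\<close>
definition signed_area :: "nat \<Rightarrow> (nat \<Rightarrow> complex) \<Rightarrow> real" where
  "signed_area n v = (\<Sum>i<n. Im (cnj (v i) * v (nxt n i))) / 2"

definition turn_angle :: "nat \<Rightarrow> (nat \<Rightarrow> complex) \<Rightarrow> nat \<Rightarrow> real" where
  "turn_angle n v i = Arg ((v (nxt n i) - v i) / (v i - v (prv n i)))"

text \<open>Interior angle at vertex i (angle of the bounded region), computed from the
  signed exterior (turning) angle relative to the orientation of the polygon.\<close>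
definition interior_angle :: "nat \<Rightarrow> (nat \<Rightarrow> complex) \<Rightarrow> nat \<Rightarrow> real" where
  "interior_angle n v i = pi - sgn (signed_area n v) * turn_angle n v i"

definition nondegenerate_ngon :: "nat \<Rightarrow> (nat \<Rightarrow> complex) \<Rightarrow> bool" where
  "nondegenerate_ngon n v \<longleftrightarrow> simple_polygon n v \<and>
     (\<forall>i<n. v (nxt n i) \<noteq> v i) \<and> (\<forall>i<n. interior_angle n v i \<noteq> pi)"

definition polygon_length :: "nat \<Rightarrow> (nat \<Rightarrow> complex) \<Rightarrow> real" where
  "polygon_length n v = (\<Sum>i<n. cmod (v (nxt n i) - v i))"

definition equiangular :: "nat \<Rightarrow> (nat \<Rightarrow> complex) \<Rightarrow> bool" where
  "equiangular n v \<longleftrightarrow> (\<forall>i<n. \<forall>j<n. interior_angle n v i = interior_angle n v j)"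

text \<open>Edge i carries the piece of the strip of width w
  centred on the line through edge i; the fold at vertex i is along the line through v i
  perpendicular to the angle bisector at v i (its normal is u i - u (i-1), u the unit edge
  directions).  The piece of edge i is bounded by the fold lines at v i and v (i+1); the
  fold lines (inside the ribbon) must be pairwise disjoint, i.e. the two fold segments
  bounding each piece must not meet in the (open) strip.  F is the folding information
  (which layer is on top at each fold); every choice gives consistent crossing information.\<close>

definition edge_dir :: "nat \<Rightarrow> (nat \<Rightarrow> complex) \<Rightarrow> nat \<Rightarrow> complex" where
  "edge_dir n v i = sgn (v (nxt n i) - v i)"

definition ribbon_strip :: "nat \<Rightarrow> (nat \<Rightarrow> complex) \<Rightarrow> real \<Rightarrow> nat \<Rightarrow> complex set" where
  "ribbon_strip n v w i = {z. \<bar>Im ((z - v i) * cnj (edge_dir n v i))\<bar> < w / 2}"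

definition fold_line :: "nat \<Rightarrow> (nat \<Rightarrow> complex) \<Rightarrow> nat \<Rightarrow> complex set" where
  "fold_line n v i =
     {z. Re ((z - v i) * cnj (edge_dir n v i - edge_dir n v (prv n i))) = 0}"

definition folded_ribbon ::
    "nat \<Rightarrow> (nat \<Rightarrow> complex) \<Rightarrow> real \<Rightarrow> (nat \<Rightarrow> bool) \<Rightarrow> bool" where
  "folded_ribbon n v w F \<longleftrightarrow> 0 < w \<and>
     (\<forall>i<n. fold_line n v i \<inter> fold_line n v (nxt n i) \<inter> ribbon_strip n v w i = {})"

end

theory Submission
  imports Defs
begin

definition ang :: "complex \<Rightarrow> complex \<Rightarrow> real" where
  "ang a b = Arg (b / a)"

lemma Arg_div_diff:
  assumes "z \<noteq> 0" "w \<noteq> 0" "-pi < Arg z - Arg w" "Arg z - Arg w \<le> pi"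
  shows "Arg (z / w) = Arg z - Arg w"
  using Arg_divide'[OF assms(1,2)] assms(3,4) by auto

definition HH :: "complex \<Rightarrow> bool" where
  "HH z \<longleftrightarrow> Im z > 0 \<or> (Im z = 0 \<and> Re z > 0)"

lemma HH_Arg: assumes "HH z" shows "z \<noteq> 0" "0 \<le> Arg z" "Arg z < pi"
proof -
  show "z \<noteq> 0" using assms by (auto simp: HH_def)
  show "0 \<le> Arg z" using assms Arg_less_0[of z] by (auto simp: HH_def)
  have "Arg z \<noteq> pi" using assms Arg_eq_pi[of z] by (auto simp: HH_def)
  then show "Arg z < pi" using Arg_le_pi[of z] by linarith
qed

lemma HH_ang: assumes "HH a" "HH b" shows "ang a b = Arg b - Arg a"
  unfolding ang_def
  using HH_Arg[OF assms(1)] HH_Arg[OF assms(2)] by (intro Arg_div_diff) auto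

lemma half_ang:
  assumes "c \<noteq> 0" "Re (a / c) > 0" "Re (b / c) > 0"
  shows "ang a b = Arg (b / c) - Arg (a / c)"
proof -
  have a: "a \<noteq> 0" and b: "b \<noteq> 0" using assms by auto
  have "\<bar>Arg (a / c)\<bar> < pi / 2" "\<bar>Arg (b / c)\<bar> < pi / 2"
    using assms Arg_Re_pos by auto
  then have "Arg ((b / c) / (a / c)) = Arg (b / c) - Arg (a / c)"
    using a b assms(1) by (intro Arg_div_diff) auto
  moreover have "(b / c) / (a / c) = b / a" using assms(1) by (simp add: field_simps)
  ultimately show ?thesis unfolding ang_def by metis
qed

lemma square_ang:
  assumes "closed_segment p1 p2 \<inter> closed_segment q1 q2 = {}"
  shows "ang (q1 - p1) (q2 - p1) + ang (q2 - p1) (q2 - p2)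
       = ang (q1 - p1) (q1 - p2) + ang (q1 - p2) (q2 - p2)"
proof -
  define S where "S = {x - y | x y. x \<in> closed_segment q1 q2 \<and> y \<in> closed_segment p1 p2}"
  have "compact S" unfolding S_def by (intro compact_differences) auto
  then have cl: "closed S" by (rule compact_imp_closed)
  have "S = (\<Union>x\<in> closed_segment q1 q2. \<Union>y \<in> closed_segment p1 p2. {x - y})"
    unfolding S_def by blast
  then have cv: "convex S" by (simp add: convex_differences)
  have z: "0 \<notin> S" using assms unfolding S_def by auto
  obtain a b where ab: "a \<noteq> 0" "0 < b" "\<forall>x\<in>S. inner a x > b"
    using separating_hyperplane_closed_0[OF cv cl z] by blast
  have pos: "Re (x / a) > 0" if "x \<in> S" for x
  proof -
    have "inner a x > 0" using ab that by force
    then have "Re a * Re x + Im a * Im x > 0" by (simp add: inner_complex_def)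
    moreover have "Re (x / a) = (Re a * Re x + Im a * Im x) / (cmod a)^2"
      by (simp add: Re_divide cmod_power2 algebra_simps)
    moreover have "(cmod a)^2 > 0" using ab by simp
    ultimately show ?thesis by simp
  qed
  have m: "q1 - p1 \<in> S" "q2 - p1 \<in> S" "q1 - p2 \<in> S" "q2 - p2 \<in> S"
    unfolding S_def by blast+
  have ca: "a \<noteq> 0" using ab by simp
  show ?thesis
    using half_ang[OF ca pos[OF m(1)] pos[OF m(2)]] half_ang[OF ca pos[OF m(2)] pos[OF m(4)]]
          half_ang[OF ca pos[OF m(1)] pos[OF m(3)]] half_ang[OF ca pos[OF m(3)] pos[OF m(4)]]
    by simp
qed

lemma cone_ang:
  assumes "a \<noteq> 0" "b \<noteq> 0" "Arg (b / a) \<noteq> pi"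
  shows "ang a (a + b) + ang (a + b) b = ang a b" "a + b \<noteq> 0"
proof -
  define z where "z = b / a"
  have z0: "z \<noteq> 0" using assms by (simp add: z_def)
  have zn: "\<not> (Re z < 0 \<and> Im z = 0)" using assms(3) Arg_eq_pi[of z] by (simp add: z_def)
  have 1: "1 + z \<noteq> 0" using zn by (auto simp: complex_eq_iff)
  have e1: "(a + b) / a = 1 + z" using assms by (simp add: z_def field_simps)
  have e2: "b / (a + b) = z / (1 + z)" using assms 1 by (simp add: z_def field_simps)
  show "a + b \<noteq> 0" using 1 e1 assms(1) by auto
  have "-pi < Arg z - Arg (1 + z) \<and> Arg z - Arg (1 + z) \<le> pi"
  proof (cases "Im z > 0")
    case True
    then have "0 < Arg z \<and> Arg z < pi" "0 < Arg (1+z) \<and> Arg (1+z) < pi" using Arg_lt_pi by auto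
    then show ?thesis by linarith
  next
    case False
    show ?thesis
    proof (cases "Im z < 0")
      case True
      then have "Arg z < 0" "Arg (1+z) < 0" using Arg_neg_iff by auto
      then show ?thesis using Arg_bounded[of z] Arg_bounded[of "1+z"] by linarith
    next
      case False
      with \<open>\<not> Im z > 0\<close> have "Im z = 0" by simp
      with zn z0 have "Re z > 0" by (auto simp: complex_eq_iff)
      then have "Arg z = 0" "Arg (1+z) = 0" using \<open>Im z = 0\<close> by (auto simp: Arg_eq_0 complex_is_Real_iff)
      then show ?thesis by simp
    qed
  qed
  then have "Arg (z / (1 + z)) = Arg z - Arg (1 + z)" using z0 1 by (intro Arg_div_diff) auto
  then show "ang a (a + b) + ang (a + b) b = ang a b"
    unfolding ang_def e1 e2 z_def[symmetric] by simp
qed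


definition hh :: "(nat \<Rightarrow> complex) \<Rightarrow> nat \<Rightarrow> nat \<Rightarrow> real" where "hh V i j = ang (V j - V i) (V (Suc j) - V i)"
definition uu :: "(nat \<Rightarrow> complex) \<Rightarrow> nat \<Rightarrow> nat \<Rightarrow> real" where "uu V i j = ang (V j - V i) (V j - V (Suc i))"

context
  fixes V :: "nat \<Rightarrow> complex" and n :: nat
  assumes n4: "4 \<le> n"
  and disj: "\<And>i j. i + 2 \<le> j \<Longrightarrow> j + 1 \<le> n \<Longrightarrow> \<not> (i = 0 \<and> j = n - 1) \<Longrightarrow>
     closed_segment (V i) (V (Suc i)) \<inter> closed_segment (V j) (V (Suc j)) = {}"
begin


lemma sq: "i + 2 \<le> j \<Longrightarrow> j + 1 \<le> n \<Longrightarrow> \<not> (i = 0 \<and> j = n - 1) \<Longrightarrow>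
   hh V i j + uu V i (Suc j) = uu V i j + hh V (Suc i) j"
  using square_ang[OF disj, of i j] unfolding hh_def uu_def by simp

lemma strip: "a \<le> b \<Longrightarrow> (\<And>j. a \<le> j \<Longrightarrow> j < b \<Longrightarrow> i + 2 \<le> j \<and> j + 1 \<le> n \<and> \<not> (i = 0 \<and> j = n - 1)) \<Longrightarrow>
  (\<Sum>j=a..<b. hh V i j) + uu V i b = uu V i a + (\<Sum>j=a..<b. hh V (Suc i) j)"
proof (induction b)
  case 0
  then show ?case by simp
next
  case (Suc b)
  show ?case
  proof (cases "a = Suc b")
    case True
    then show ?thesis by simp
  next
    case False
    then have ab: "a \<le> b" using Suc.prems by simp
    have IH: "(\<Sum>j=a..<b. hh V i j) + uu V i b = uu V i a + (\<Sum>j=a..<b. hh V (Suc i) j)"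
      using Suc.IH[OF ab] Suc.prems(2) by simp
    have c: "i + 2 \<le> b \<and> b + 1 \<le> n \<and> \<not> (i = 0 \<and> b = n - 1)" using Suc.prems(2)[of b] ab by simp
    have "hh V i b + uu V i (Suc b) = uu V i b + hh V (Suc i) b" using sq c by blast
    then show ?thesis using IH ab by simp
  qed
qed

definition QQ where "QQ i = (\<Sum>j=Suc i..<n. hh V i j) + (\<Sum>k=i..<n-1. uu V k n)"

lemma Qrec: "1 \<le> i \<Longrightarrow> i + 2 \<le> n \<Longrightarrow> QQ i = hh V i (Suc i) + uu V i (i+2) + QQ (Suc i)"
proof -
  assume i: "1 \<le> i" "i + 2 \<le> n"
  have s1: "(\<Sum>j=Suc i..<n. hh V i j) = hh V i (Suc i) + (\<Sum>j=i+2..<n. hh V i j)"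
    using i by (subst sum.atLeast_Suc_lessThan) auto
  have s2: "(\<Sum>k=i..<n-1. uu V k n) = uu V i n + (\<Sum>k=Suc i..<n-1. uu V k n)"
    using i by (subst sum.atLeast_Suc_lessThan) auto
  have st: "(\<Sum>j=i+2..<n. hh V i j) + uu V i n = uu V i (i+2) + (\<Sum>j=i+2..<n. hh V (Suc i) j)"
    using i by (intro strip) auto
  show ?thesis unfolding QQ_def s1 s2 using st by simp
qed

lemma Qsum: "1 \<le> i \<Longrightarrow> i \<le> n - 1 \<Longrightarrow> QQ i = (\<Sum>k=i..<n-1. hh V k (Suc k) + uu V k (k+2))"
proof (induction "n - 1 - i" arbitrary: i)
  case 0
  then have "i = n - 1" by simp
  then show ?case using n4 by (simp add: QQ_def)
next
  case (Suc m)
  then have i: "1 \<le> i" "i + 2 \<le> n" by auto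
  have "QQ (Suc i) = (\<Sum>k=Suc i..<n-1. hh V k (Suc k) + uu V k (k+2))"
    using Suc by auto
  moreover have "(\<Sum>k=i..<n-1. hh V k (Suc k) + uu V k (k+2)) =
     (hh V i (Suc i) + uu V i (i+2)) + (\<Sum>k=Suc i..<n-1. hh V k (Suc k) + uu V k (k+2))"
    using i by (subst sum.atLeast_Suc_lessThan) auto
  ultimately show ?case using Qrec[OF i] by simp
qed

lemma pathB: "(\<Sum>j=1..<n-1. hh V 0 j) + uu V 0 (n-1) + hh V 1 (n-1) + (\<Sum>k=1..<n-1. uu V k n)
   = (\<Sum>k=0..<n-1. hh V k (Suc k) + uu V k (k+2))"
proof -
  have s1: "(\<Sum>j=1..<n-1. hh V 0 j) = hh V 0 1 + (\<Sum>j=2..<n-1. hh V 0 j)"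
    using n4 by (subst sum.atLeast_Suc_lessThan) (auto simp: numeral_2_eq_2)
  have st0: "(\<Sum>j=2..<n-1. hh V 0 j) + uu V 0 (n-1) = uu V 0 2 + (\<Sum>j=2..<n-1. hh V (Suc 0) j)"
    using n4 by (intro strip) auto
  then have st: "(\<Sum>j=2..<n-1. hh V 0 j) + uu V 0 (n-1) = uu V 0 2 + (\<Sum>j=2..<n-1. hh V 1 j)" by simp
  have s3: "(\<Sum>j=2..<n-1. hh V 1 j) + hh V 1 (n-1) = (\<Sum>j=2..<n. hh V 1 j)"
  proof -
    obtain m where m: "n = Suc m" using n4 by (cases n) auto
    have "2 \<le> m" using n4 m by simp
    then show ?thesis unfolding m using sum.atLeastLessThan_Suc[of 2 m "hh V 1"] by simp
  qed
  have q1: "QQ 1 = (\<Sum>k=1..<n-1. hh V k (Suc k) + uu V k (k+2))" using n4 by (intro Qsum) auto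
  have s4: "(\<Sum>k=0..<n-1. hh V k (Suc k) + uu V k (k+2)) = (hh V 0 1 + uu V 0 2) + (\<Sum>k=1..<n-1. hh V k (Suc k) + uu V k (k+2))"
    using n4 by (subst sum.atLeast_Suc_lessThan) (auto simp: numeral_2_eq_2)
  show ?thesis using s1 st s3 q1 s4 unfolding QQ_def by (simp add: numeral_2_eq_2)
qed

end


lemma ang_minus: "ang (- a) (- b) = ang a b"
  by (simp add: ang_def)

lemma umlauf:
  fixes V :: "nat \<Rightarrow> complex" and n :: nat
  assumes n4: "4 \<le> n" and Vn: "V n = V 0"
  and disj: "\<And>i j. i + 2 \<le> j \<Longrightarrow> j + 1 \<le> n \<Longrightarrow> \<not> (i = 0 \<and> j = n - 1) \<Longrightarrow>
     closed_segment (V i) (V (Suc i)) \<inter> closed_segment (V j) (V (Suc j)) = {}"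
  and adj0: "closed_segment (V (n-1)) (V n) \<inter> closed_segment (V 0) (V 1) = {V 0}"
  and nz: "\<And>i. i < n \<Longrightarrow> V (Suc i) \<noteq> V i"
  and nopi: "\<And>k. k + 2 \<le> n \<Longrightarrow> Arg ((V (k+2) - V (Suc k)) / (V (Suc k) - V k)) \<noteq> pi"
  and low: "\<And>j. 1 \<le> j \<Longrightarrow> j \<le> n - 1 \<Longrightarrow> HH (V j - V 0)"
  shows "(\<Sum>k<n-1. ang (V (Suc k) - V k) (V (k+2) - V (Suc k))) + ang (V n - V (n-1)) (V 1 - V 0)
          \<in> {2*pi, -2*pi}"
proof -
  define A where "A = V 1 - V 0"
  define B where "B = V (n-1) - V 0"
  have tri: "hh V k (Suc k) + uu V k (k+2) = ang (V (Suc k) - V k) (V (k+2) - V (Suc k))"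
    if "k < n - 1" for k
  proof -
    have a: "V (Suc k) - V k \<noteq> 0" using nz[of k] that by auto
    have b: "V (k+2) - V (Suc k) \<noteq> 0" using nz[of "Suc k"] that by auto
    have p: "Arg ((V (k+2) - V (Suc k)) / (V (Suc k) - V k)) \<noteq> pi" using nopi[of k] that by auto
    have e: "(V (Suc k) - V k) + (V (k+2) - V (Suc k)) = V (Suc (Suc k)) - V k" by simp
    show ?thesis using cone_ang(1)[OF a b p] unfolding e hh_def uu_def
      by (simp add: numeral_2_eq_2)
  qed
  have sumtri: "(\<Sum>k<n-1. ang (V (Suc k) - V k) (V (k+2) - V (Suc k))) =
      (\<Sum>k=0..<n-1. hh V k (Suc k) + uu V k (k+2))"
    using tri by (simp add: atLeast0LessThan)
  have PB: "(\<Sum>j=1..<n-1. hh V 0 j) + uu V 0 (n-1) + hh V 1 (n-1) + (\<Sum>k=1..<n-1. uu V k n)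
   = (\<Sum>k=0..<n-1. hh V k (Suc k) + uu V k (k+2))"
    by (rule pathB[of n V, OF n4 disj]) auto
  define th where "th j = Arg (V j - V 0)" for j
  have row: "(\<Sum>j=1..<n-1. hh V 0 j) = (\<Sum>j=1..<n-1. th (Suc j) - th j)"
  proof (rule sum.cong)
    fix j assume "j \<in> {1..<n-1}"
    then have "HH (V j - V 0)" "HH (V (Suc j) - V 0)" using low by auto
    then show "hh V 0 j = th (Suc j) - th j" unfolding hh_def th_def by (rule HH_ang)
  qed simp
  have col: "(\<Sum>k=1..<n-1. uu V k n) = (\<Sum>j=1..<n-1. th (Suc j) - th j)"
  proof (rule sum.cong)
    fix j assume "j \<in> {1..<n-1}"
    then have "HH (V j - V 0)" "HH (V (Suc j) - V 0)" using low by auto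
    then have "ang (V j - V 0) (V (Suc j) - V 0) = th (Suc j) - th j" unfolding th_def by (rule HH_ang)
    moreover have "uu V j n = ang (V j - V 0) (V (Suc j) - V 0)"
      unfolding uu_def Vn using ang_minus[of "V j - V 0" "V (Suc j) - V 0"] by simp
    ultimately show "uu V j n = th (Suc j) - th j" by simp
  qed simp
  have tele: "(\<Sum>j=1..<n-1. th (Suc j) - th j) = Arg B - Arg A"
    using sum_Suc_diff'[of 1 "n-1" th] n4 by (simp add: th_def A_def B_def)
  have c1: "uu V 0 (n-1) = ang B (B + - A)"
    unfolding uu_def A_def B_def by simp
  have c2: "hh V 1 (n-1) = ang (B + - A) (- A)"
  proof -
    have "Suc (n-1) = n" using n4 by simp
    then show ?thesis unfolding hh_def A_def B_def using Vn by simp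
  qed
  have c3: "ang (V n - V (n-1)) (V 1 - V 0) = ang B (- A)"
    unfolding ang_def A_def B_def Vn using minus_divide_divide[of "V 0 - V 1" "V (n-1) - V 0"] by simp
  have HA: "HH A" using low[of 1] n4 by (simp add: A_def)
  have HB: "HH B" using low[of "n-1"] n4 by (simp add: B_def)
  have A0: "A \<noteq> 0" and B0: "B \<noteq> 0" using HH_Arg HA HB by auto
  have notpos: "\<not> (Im (A / B) = 0 \<and> Re (A / B) > 0)"
  proof
    assume h: "Im (A / B) = 0 \<and> Re (A / B) > 0"
    define r where "r = Re (A / B)"
    have "A / B = of_real r" using h by (simp add: r_def complex_eq_iff)
    then have Ar: "A = of_real r * B" using B0 by (simp add: field_simps)
    have r0: "r > 0" using h r_def by simp
    show False
    proof (cases "r \<le> 1")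
      case True
      have "V 1 = (1 - (1 - r)) *\<^sub>R V (n-1) + (1 - r) *\<^sub>R V n"
        using Ar unfolding A_def B_def Vn scaleR_conv_of_real
        by (simp add: algebra_simps)
      then have "V 1 \<in> closed_segment (V (n-1)) (V n)" using True r0
        unfolding in_segment by (intro conjI exI[of _ "1 - r"]) auto
      then have "V 1 \<in> {V 0}" using adj0 by auto
      then show False using nz[of 0] n4 by auto
    next
      case False
      have "V (n-1) = (1 - 1/r) *\<^sub>R V 0 + (1/r) *\<^sub>R V 1"
        using Ar r0 unfolding A_def B_def scaleR_conv_of_real
        by (simp add: algebra_simps of_real_def) (simp add: field_simps scaleR_conv_of_real)
      then have "V (n-1) \<in> closed_segment (V 0) (V 1)" using False r0
        unfolding in_segment by (intro conjI exI[of _ "1/r"]) auto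
      then have "V (n-1) \<in> {V 0}" using adj0 by auto
      then show False using nz[of "n-1"] n4 Vn by auto
    qed
  qed
  have p: "Arg (- A / B) \<noteq> pi"
  proof
    assume "Arg (- A / B) = pi"
    then have "Re (- A / B) < 0 \<and> Im (- A / B) = 0" using Arg_eq_pi by blast
    then show False using notpos by simp
  qed
  have mA: "- A \<noteq> 0" using A0 by simp
  have cone: "ang B (B + - A) + ang (B + - A) (- A) = ang B (- A)"
    using cone_ang(1)[OF B0 mA p] .
  have dl: "Arg (A / B) = Arg A - Arg B" using HH_ang[OF HB HA] by (simp add: ang_def)
  have AB0: "A / B \<noteq> 0" using A0 B0 by simp
  have "ang B (- A) = Arg (- (A / B))" by (simp add: ang_def)
  also have "\<dots> = (if Arg (A/B) \<le> 0 then Arg (A/B) + pi else Arg (A/B) - pi)"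
    using Arg_minus[OF AB0] .
  finally have angBA: "ang B (- A) = (if Arg A - Arg B \<le> 0 then Arg A - Arg B + pi else Arg A - Arg B - pi)"
    using dl by simp
  have total: "(\<Sum>k<n-1. ang (V (Suc k) - V k) (V (k+2) - V (Suc k))) + ang (V n - V (n-1)) (V 1 - V 0)
      = 2 * (Arg B - Arg A) + 2 * ang B (- A)"
    using sumtri PB[symmetric] row col tele c1 c2 c3 cone by simp
  show ?thesis unfolding total angBA by auto
qed


lemma modc0: "(x + c) mod n = (y + c) mod (n::nat) \<Longrightarrow> x < n \<Longrightarrow> y \<le> x \<Longrightarrow> x = y"
proof -
  assume h: "(x + c) mod n = (y + c) mod n" "x < n" "y \<le> x"
  then have "n dvd (x + c) - (y + c)" using mod_eq_dvd_iff_nat[of "y + c" "x + c" n] by auto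
  then have "n dvd x - y" by simp
  moreover have "x - y < n" using h by simp
  ultimately have "x - y = 0" using dvd_imp_le by fastforce
  then show ?thesis using h by simp
qed

lemma modc: "(x + c) mod n = (y + c) mod (n::nat) \<Longrightarrow> x < n \<Longrightarrow> y < n \<Longrightarrow> x = y"
  by (metis modc0 nat_le_linear)

lemma prvc: "((Suc k + m) mod n + n - 1) mod n = (k + m) mod (n::nat)" if "n > 0"
  by (metis One_nat_def add.commute diff_Suc_1' gr0_implies_Suc
    mod_add_right_eq mod_add_self2 nat_arith.suc1 that)

lemma reindex_mod: "(\<Sum>k<n. f ((k + c) mod n)) = (\<Sum>k<(n::nat). f k)"
proof (cases "n = 0")
  case True then show ?thesis by simp
next
  case False
  let ?g = "\<lambda>k. (k + c) mod n"
  have inj: "inj_on ?g {..<n}"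
  proof (rule inj_onI)
    fix x y assume "x \<in> {..<n}" "y \<in> {..<n}" "(x + c) mod n = (y + c) mod n"
    then show "x = y" using modc[of x c n y] by simp
  qed
  have sub: "?g ` {..<n} \<subseteq> {..<n}" using False by auto
  have im: "?g ` {..<n} = {..<n}" using endo_inj_surj[OF _ sub inj] by simp
  have "(\<Sum>k<n. f k) = sum f (?g ` {..<n})" using im by simp
  also have "\<dots> = (\<Sum>k<n. f (?g k))" using sum.reindex[OF inj] by simp
  finally show ?thesis by simp
qed

lemma nxt_shift: "nxt n ((x + m) mod n) = (Suc x + m) mod n"
  unfolding nxt_def by (simp add: mod_Suc_eq)

lemma simple_disj:
  assumes "simple_polygon n v" "I < n" "J < n" "I \<noteq> J" "J \<noteq> nxt n I" "I \<noteq> nxt n J"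
  shows "edge_seg n v I \<inter> edge_seg n v J = {}"
  using assms unfolding simple_polygon_def by auto

lemma simple_adj:
  assumes "simple_polygon n v" "I < n" "J < n" "I \<noteq> J" "J = nxt n I"
  shows "edge_seg n v I \<inter> edge_seg n v J = {v J}"
  using assms unfolding simple_polygon_def by auto

lemma vert_distinct:
  assumes "nondegenerate_ngon n v" "I < n" "J < n" "I \<noteq> J"
  shows "v I \<noteq> v J"
proof -
  have sp: "simple_polygon n v" and nz: "\<forall>i<n. v (nxt n i) \<noteq> v i"
    using assms(1) unfolding nondegenerate_ngon_def by auto
  show ?thesis
  proof (cases "J = nxt n I")
    case True then show ?thesis using nz assms(2) by auto
  next
    case False
    show ?thesis
    proof (cases "I = nxt n J")
      case True then show ?thesis using nz assms(3) by auto
    next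
      case False2: False
      have "edge_seg n v I \<inter> edge_seg n v J = {}"
        using simple_disj[OF sp assms(2-4) False False2] .
      moreover have "v I \<in> edge_seg n v I" "v J \<in> edge_seg n v J"
        unfolding edge_seg_def by auto
      ultimately show ?thesis by auto
    qed
  qed
qed

lemma lowest:
  fixes v :: "nat \<Rightarrow> complex"
  assumes "0 < n"
  shows "\<exists>m<n. \<forall>j<n. Im (v m) < Im (v j) \<or> (Im (v m) = Im (v j) \<and> Re (v m) \<le> Re (v j))"
proof -
  define S where "S = (\<lambda>j. Im (v j)) ` {..<n}"
  have fS: "finite S" "S \<noteq> {}" using assms by (auto simp: S_def)
  define mi where "mi = Min S"
  have mi_le: "mi \<le> Im (v j)" if "j < n" for j using fS that by (auto simp: mi_def S_def)
  obtain j0 where j0: "j0 < n" "Im (v j0) = mi" using Min_in[OF fS] by (auto simp: mi_def S_def)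
  define T where "T = {j. j < n \<and> Im (v j) = mi}"
  define R where "R = (\<lambda>j. Re (v j)) ` T"
  have fR: "finite R" "R \<noteq> {}" using j0 by (auto simp: R_def T_def)
  obtain m where m: "m \<in> T" "Re (v m) = Min R" using Min_in[OF fR] by (auto simp: R_def)
  have re: "Re (v m) \<le> Re (v j)" if "j \<in> T" for j using fR that m by (auto simp: R_def)
  have mT: "m < n" "Im (v m) = mi" using m by (auto simp: T_def)
  show ?thesis
  proof (intro exI[of _ m] conjI allI impI)
    show "m < n" using mT by simp
    fix j assume j: "j < n"
    show "Im (v m) < Im (v j) \<or> (Im (v m) = Im (v j) \<and> Re (v m) \<le> Re (v j))"
    proof (cases "Im (v j) = mi")
      case True
      then have "j \<in> T" using j by (simp add: T_def)
      then show ?thesis using re mT True by simp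
    next
      case False
      then show ?thesis using mi_le[OF j] mT by simp
    qed
  qed
qed

lemma turn_sum:
  assumes n4: "4 \<le> n" and nd: "nondegenerate_ngon n v"
  and np: "\<And>i. i < n \<Longrightarrow> turn_angle n v i \<noteq> pi"
  shows "(\<Sum>i<n. turn_angle n v i) \<in> {2*pi, -2*pi}"
proof -
  have n0: "0 < n" using n4 by simp
  have sp: "simple_polygon n v" and nz0: "\<forall>i<n. v (nxt n i) \<noteq> v i"
    using nd unfolding nondegenerate_ngon_def by auto
  obtain m where m: "m < n" and mlow: "\<forall>j<n. Im (v m) < Im (v j) \<or> (Im (v m) = Im (v j) \<and> Re (v m) \<le> Re (v j))"
    using lowest[OF n0] by blast
  define V where "V k = v ((k + m) mod n)" for k
  have V0: "V 0 = v m" using m by (simp add: V_def)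
  have Vn: "V n = V 0" by (simp add: V_def)
  have seg: "closed_segment (V i) (V (Suc i)) = edge_seg n v ((i + m) mod n)" for i
    unfolding edge_seg_def nxt_shift V_def by simp
  have ltn: "(x + m) mod n < n" for x using n0 by simp
  have disj: "closed_segment (V i) (V (Suc i)) \<inter> closed_segment (V j) (V (Suc j)) = {}"
    if h: "i + 2 \<le> j" "j + 1 \<le> n" "\<not> (i = 0 \<and> j = n - 1)" for i j
  proof -
    define I where "I = (i + m) mod n"
    define J where "J = (j + m) mod n"
    have IJ: "I \<noteq> J" unfolding I_def J_def using modc[of i m n j] h by auto
    have JI: "J \<noteq> nxt n I" unfolding I_def J_def nxt_shift using modc[of j m n "Suc i"] h by auto
    have IJ2: "I \<noteq> nxt n J"
    proof (cases "Suc j < n")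
      case True
      then show ?thesis unfolding I_def J_def nxt_shift using modc[of i m n "Suc j"] h by auto
    next
      case False
      then have "Suc j = n" using h by simp
      then have "nxt n J = (0 + m) mod n" unfolding J_def nxt_shift by simp
      moreover have "i \<noteq> 0" using h \<open>Suc j = n\<close> by auto
      ultimately show ?thesis unfolding I_def using modc[of i m n 0] h n0 by auto
    qed
    have "edge_seg n v I \<inter> edge_seg n v J = {}"
      using simple_disj[OF sp _ _ IJ JI IJ2] ltn unfolding I_def J_def by blast
    then show ?thesis unfolding seg I_def J_def .
  qed
  have adj0: "closed_segment (V (n-1)) (V n) \<inter> closed_segment (V 0) (V 1) = {V 0}"
  proof -
    define I where "I = (n - 1 + m) mod n"
    have nI: "nxt n I = m" unfolding I_def nxt_shift using n0 m by simp
    have IJ: "I \<noteq> m" using modc[of "n-1" m n 0] n4 m unfolding I_def by auto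
    have "edge_seg n v I \<inter> edge_seg n v m = {v m}"
      using simple_adj[OF sp _ m IJ nI[symmetric]] ltn unfolding I_def by blast
    moreover have "closed_segment (V (n-1)) (V n) = edge_seg n v I"
      using seg[of "n-1"] n0 by (simp add: I_def)
    moreover have "closed_segment (V 0) (V 1) = edge_seg n v m"
      using seg[of 0] m by simp
    ultimately show ?thesis using V0 by simp
  qed
  have nz: "V (Suc i) \<noteq> V i" if "i < n" for i
    using nz0[rule_format, OF ltn[of i]] unfolding V_def nxt_shift by simp
  have turnV: "turn_angle n v ((Suc k + m) mod n) = Arg ((V (k+2) - V (Suc k)) / (V (Suc k) - V k))" for k
  proof -
    have "prv n ((Suc k + m) mod n) = (k + m) mod n" unfolding prv_def using prvc n0 by simp
    then show ?thesis unfolding turn_angle_def nxt_shift V_def by (simp add: numeral_2_eq_2)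
  qed
  have nopi: "Arg ((V (k+2) - V (Suc k)) / (V (Suc k) - V k)) \<noteq> pi" if "k + 2 \<le> n" for k
    using np[of "(Suc k + m) mod n"] ltn[of "Suc k"] turnV[of k] by simp
  have low: "HH (V j - V 0)" if "1 \<le> j" "j \<le> n - 1" for j
  proof -
    define J where "J = (j + m) mod n"
    have jn: "j < n" using that n4 by simp
    have J: "J < n" "J \<noteq> m" unfolding J_def using modc[of j m n 0] that jn n0 m by auto
    have ne: "v J \<noteq> v m" using vert_distinct[OF nd J(1) m J(2)] .
    have "Im (v m) < Im (v J) \<or> (Im (v m) = Im (v J) \<and> Re (v m) \<le> Re (v J))" using mlow J by blast
    then show ?thesis using ne unfolding HH_def V0 by (auto simp: V_def J_def[symmetric] complex_eq_iff)
  qed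
  have U: "(\<Sum>k<n-1. ang (V (Suc k) - V k) (V (k+2) - V (Suc k))) + ang (V n - V (n-1)) (V 1 - V 0)
          \<in> {2*pi, -2*pi}"
    by (rule umlauf[OF n4 Vn disj adj0 nz nopi low]) auto
  define T where "T k = Arg ((V (k+2) - V (Suc k)) / (V (Suc k) - V k))" for k
  have s1: "(\<Sum>i<n. turn_angle n v i) = (\<Sum>k<n. T k)"
  proof -
    have "(\<Sum>i<n. turn_angle n v i) = (\<Sum>k<n. turn_angle n v ((k + Suc m) mod n))"
      using reindex_mod[of "turn_angle n v" "Suc m" n] by simp
    also have "\<dots> = (\<Sum>k<n. T k)"
    proof (rule sum.cong)
      fix k assume "k \<in> {..<n}"
      have "k + Suc m = Suc k + m" by simp
      then show "turn_angle n v ((k + Suc m) mod n) = T k" using turnV[of k] unfolding T_def by simp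
    qed simp
    finally show ?thesis .
  qed
  have s2: "(\<Sum>k<n. T k) = (\<Sum>k<n-1. T k) + T (n-1)"
  proof -
    obtain p where p: "n = Suc p" using n0 by (cases n) auto
    show ?thesis unfolding p using sum.lessThan_Suc[of T p] by simp
  qed
  have e1: "V (n - 1 + 2) = V 1"
  proof -
    have "n - 1 + 2 + m = n + (1 + m)" using n0 by simp
    then show ?thesis unfolding V_def by (simp only: mod_add_self1)
  qed
  have e2: "Suc (n - 1) = n" using n0 by simp
  have s3: "T (n-1) = ang (V n - V (n-1)) (V 1 - V 0)"
    unfolding T_def e1 e2 ang_def Vn ..
  have s4: "(\<Sum>k<n-1. T k) = (\<Sum>k<n-1. ang (V (Suc k) - V k) (V (k+2) - V (Suc k)))"
    unfolding T_def ang_def ..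
  show ?thesis unfolding s1 s2 s3 s4 using U .
qed


lemma fold_geom:
  fixes p u :: complex and l t t' :: real
  assumes u1: "cmod u = 1"
  and st: "sin (t/2) \<noteq> 0" and st': "sin (t'/2) \<noteq> 0"
  and K: "cot (t/2) + cot (t'/2) \<noteq> 0"
  and y: "y = - l / (cot (t/2) + cot (t'/2))"
  and x: "x = - y * cot (t/2)"
  and z: "z = p + u * Complex x y"
  shows "Re ((z - p) * cnj (u - u * cis (-t))) = 0"
    "Re ((z - (p + of_real l * u)) * cnj (u * cis t' - u)) = 0"
    "Im ((z - p) * cnj u) = y"
proof -
  have uu: "u * cnj u = 1"
    using complex_norm_square[of u] u1 by simp
  have "(z - p) * cnj (u - u * cis (-t)) = (u * cnj u) * (Complex x y * (1 - cis t))"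
    unfolding z by (simp add: cis_cnj algebra_simps)
  then have e1: "(z - p) * cnj (u - u * cis (-t)) = Complex x y * (1 - cis t)" using uu by simp
  define a where "a = t / 2"
  have ta: "t = 2 * a" by (simp add: a_def)
  have r1: "Re (Complex x y * (1 - cis t)) = x * (1 - cos t) + y * sin t" by simp
  also have "\<dots> = 2 * sin a * (x * sin a + y * cos a)"
    unfolding ta cos_double_sin sin_double by (simp add: algebra_simps power2_eq_square)
  also have "x * sin a + y * cos a = 0"
    using st unfolding x a_def by (simp add: cot_def field_simps)
  finally show "Re ((z - p) * cnj (u - u * cis (-t))) = 0" using e1 by simp
  have "(z - (p + of_real l * u)) * cnj (u * cis t' - u) = (u * cnj u) * (Complex (x - l) y * (cis (-t') - 1))"
    unfolding z by (simp add: cis_cnj algebra_simps complex_eq_iff)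
  then have e2: "(z - (p + of_real l * u)) * cnj (u * cis t' - u) = Complex (x - l) y * (cis (-t') - 1)"
    using uu by simp
  define b where "b = t' / 2"
  have tb: "t' = 2 * b" by (simp add: b_def)
  have "Re (Complex (x - l) y * (cis (-t') - 1)) = (x - l) * (cos t' - 1) + y * sin t'" by simp
  also have "\<dots> = 2 * sin b * (y * cos b - (x - l) * sin b)"
    unfolding tb cos_double_sin sin_double by (simp add: algebra_simps power2_eq_square)
  also have "y * cos b - (x - l) * sin b = 0"
  proof -
    have "y * (cot a + cot b) = - l" using K y unfolding a_def b_def by (simp add: field_simps)
    then have "x - l = y * cot b" using x unfolding a_def by (simp add: algebra_simps)
    then show ?thesis using st' unfolding b_def by (simp add: cot_def field_simps)
  qed
  finally show "Re ((z - (p + of_real l * u)) * cnj (u * cis t' - u)) = 0" using e2 by simp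
  have "(z - p) * cnj u = (u * cnj u) * Complex x y" unfolding z by (simp add: algebra_simps)
  then show "Im ((z - p) * cnj u) = y" using uu by simp
qed

lemma cot_tangent:
  fixes a b :: real
  assumes a: "0 < a" "a < pi/2" and b: "0 < b" "b < pi/2" and ne: "b \<noteq> a"
  shows "cot a - (b - a) / (sin a)^2 < cot b"
proof -
  define s where "s = (sin a)^2"
  have sa: "0 < sin a" using a sin_gt_zero2 by auto
  have s0: "0 < s" using sa by (simp add: s_def)
  define f where "f x = cot x + x / s" for x
  define f' where "f' x = - inverse ((sin x)^2) + 1 / s" for x
  have D: "(f has_real_derivative f' x) (at x)" if "0 < x" "x < pi/2" for x
  proof -
    have "sin x \<noteq> 0" using sin_gt_zero2 that by fastforce
    then show ?thesis unfolding f_def f'_def using s0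
      by (auto intro!: derivative_eq_intros)
  qed
  have key: "f a < f b"
  proof (cases "a < b")
    case True
    obtain c where c: "a < c" "c < b" "f b - f a = (b - a) * f' c"
      using MVT2[OF True, of f f'] D a b by force
    have "sin a < sin c" using c a b by (intro sin_monotone_2pi) auto
    then have "s < (sin c)^2" unfolding s_def using sa by (simp add: power_strict_mono)
    then have "inverse ((sin c)^2) < 1 / s" using s0 by (simp add: inverse_eq_divide frac_less2)
    then have "f' c > 0" unfolding f'_def by simp
    moreover have "(b - a) * f' c > 0" using True \<open>f' c > 0\<close> by simp
    ultimately show ?thesis using c by linarith
  next
    case False
    then have ba: "b < a" using ne by simp
    obtain c where c: "b < c" "c < a" "f a - f b = (a - b) * f' c"
      using MVT2[OF ba, of f f'] D a b by force
    have sc: "0 < sin c" using c b sin_gt_zero2 a by auto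
    have "sin c < sin a" using c a b by (intro sin_monotone_2pi) auto
    then have "(sin c)^2 < s" unfolding s_def using sc by (simp add: power_strict_mono)
    then have "1 / s < inverse ((sin c)^2)" using sc by (simp add: inverse_eq_divide frac_less2)
    then have "f' c < 0" unfolding f'_def by simp
    moreover have "(a - b) * f' c < 0" using ba \<open>f' c < 0\<close> by (simp add: mult_pos_neg)
    ultimately show ?thesis using c by linarith
  qed
  moreover have "(b - a) / s = b / s - a / s" by (simp add: diff_divide_distrib)
  ultimately show ?thesis unfolding f_def s_def[symmetric] by linarith
qed


lemma nxt_prv: "0 < n \<Longrightarrow> i < n \<Longrightarrow> nxt n (prv n i) = i"
  unfolding nxt_def prv_def by (simp add: mod_Suc_eq)

lemma prv_nxt: "0 < n \<Longrightarrow> i < n \<Longrightarrow> prv n (nxt n i) = i"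
  unfolding nxt_def prv_def using prvc[of n i 0] by simp

lemma nxt_lt: "0 < n \<Longrightarrow> nxt n i < n" unfolding nxt_def by simp
lemma prv_lt: "0 < n \<Longrightarrow> prv n i < n" unfolding prv_def by simp

lemma cis_turn:
  assumes "a \<noteq> 0" "b \<noteq> 0"
  shows "cis (Arg (a / b)) = sgn a / sgn b"
  using assms by (simp add: cis_Arg sgn_divide)

lemma fold_ineq:
  assumes fr: "folded_ribbon n v w F" and i: "i < n"
  and nz1: "v (nxt n i) \<noteq> v i" and nz0: "v i \<noteq> v (prv n i)" and nz2: "v (nxt n (nxt n i)) \<noteq> v (nxt n i)"
  and s: "s = 1 \<or> s = -1"
  and b1: "turn_angle n v i = 2 * s * b1" "0 < b1" "b1 < pi/2"
  and b2: "turn_angle n v (nxt n i) = 2 * s * b2" "0 < b2" "b2 < pi/2"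
  shows "w * (cot b1 + cot b2) \<le> 2 * cmod (v (nxt n i) - v i)"
proof -
  have n0: "0 < n" using i by simp
  define p where "p = v i"
  define q where "q = v (nxt n i)"
  define pp where "pp = v (prv n i)"
  define qq where "qq = v (nxt n (nxt n i))"
  define l where "l = cmod (q - p)"
  define u where "u = edge_dir n v i"
  define t where "t = turn_angle n v i"
  define t' where "t' = turn_angle n v (nxt n i)"
  have l0: "l > 0" using nz1 by (simp add: l_def p_def q_def)
  have u: "u = sgn (q - p)" by (simp add: u_def edge_dir_def p_def q_def)
  have u1: "cmod u = 1" using nz1 by (simp add: u norm_sgn p_def q_def)
  have qpl: "q = p + of_real l * u"
  proof -
    have "of_real l \<noteq> (0::complex)" using l0 by simp
    then show ?thesis unfolding u l_def by (simp add: sgn_div_norm scaleR_conv_of_real field_simps)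
  qed
  have uprev: "edge_dir n v (prv n i) = u * cis (- t)"
  proof -
    have e: "edge_dir n v (prv n i) = sgn (p - pp)"
      unfolding edge_dir_def nxt_prv[OF n0 i] p_def pp_def ..
    have c: "cis t = sgn (q - p) / sgn (p - pp)" unfolding t_def turn_angle_def
      using cis_turn[of "q - p" "p - pp"] nz1 nz0 by (simp add: p_def q_def pp_def)
    have "sgn (p - pp) \<noteq> 0" using nz0 by (simp add: p_def pp_def sgn_eq_0_iff)
    then have "sgn (p - pp) = sgn (q - p) / cis t" using c by (simp add: field_simps)
    moreover have "sgn (q - p) / cis t = sgn (q - p) * cis (- t)"
      by (simp only: divide_inverse cis_inverse)
    ultimately show ?thesis unfolding e u by simp
  qed
  have unext: "edge_dir n v (nxt n i) = u * cis t'"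
  proof -
    have e: "edge_dir n v (nxt n i) = sgn (qq - q)"
      unfolding edge_dir_def qq_def q_def ..
    have c: "cis t' = sgn (qq - q) / sgn (q - p)" unfolding t'_def turn_angle_def prv_nxt[OF n0 i]
      using cis_turn[of "qq - q" "q - p"] nz1 nz2 by (simp add: p_def q_def qq_def)
    have "sgn (q - p) \<noteq> 0" using nz1 by (simp add: p_def q_def sgn_eq_0_iff)
    then show ?thesis unfolding e u c by simp
  qed
  have sb1: "t / 2 = s * b1" using b1 by (simp add: t_def)
  have sb2: "t' / 2 = s * b2" using b2 by (simp add: t'_def)
  have cotsb: "cot (s * x) = s * cot x" for x using s by auto
  have sinsb: "sin (s * x) \<noteq> 0" if "0 < x" "x < pi/2" for x
  proof -
    have "sin x > 0" using that sin_gt_zero2 by auto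
    then show ?thesis using s by auto
  qed
  have C1: "cot b1 > 0" "cot b2 > 0" using b1 b2 cot_gt_zero by auto
  define K where "K = cot (t/2) + cot (t'/2)"
  have K: "K = s * (cot b1 + cot b2)" unfolding K_def sb1 sb2 cotsb by (simp add: algebra_simps)
  have K0: "K \<noteq> 0" using K C1 s by auto
  define y where "y = - l / K"
  define x where "x = - y * cot (t/2)"
  define z where "z = p + u * Complex x y"
  have g: "Re ((z - p) * cnj (u - u * cis (-t))) = 0"
    "Re ((z - (p + of_real l * u)) * cnj (u * cis t' - u)) = 0"
    "Im ((z - p) * cnj u) = y"
    using fold_geom[OF u1 _ _ _ _ x_def z_def, of t' l] sinsb[OF b1(2,3)] sinsb[OF b2(2,3)] K0
    unfolding sb1 sb2 y_def K_def by auto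
  have z1: "z \<in> fold_line n v i"
    unfolding fold_line_def uprev using g(1) by (simp add: p_def u_def)
  have z2: "z \<in> fold_line n v (nxt n i)"
    unfolding fold_line_def unext prv_nxt[OF n0 i] using g(2) qpl by (simp add: q_def u_def)
  have "fold_line n v i \<inter> fold_line n v (nxt n i) \<inter> ribbon_strip n v w i = {}"
    using fr i unfolding folded_ribbon_def by blast
  then have "z \<notin> ribbon_strip n v w i" using z1 z2 by blast
  then have "\<not> \<bar>y\<bar> < w / 2" using g(3) unfolding ribbon_strip_def by (simp add: p_def u_def)
  moreover have "\<bar>y\<bar> = l / (cot b1 + cot b2)"
    unfolding y_def K using s C1 l0 by auto
  ultimately have "w / 2 \<le> l / (cot b1 + cot b2)" by simp
  then show ?thesis using C1 by (simp add: l_def p_def q_def field_simps)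
qed


lemma part1:
  assumes n4: "4 \<le> n" and nd: "nondegenerate_ngon n v" and len: "polygon_length n v = 1"
  and angs: "\<forall>i<n. pi / 2 \<le> interior_angle n v i \<and> interior_angle n v i < pi"
  and fr: "folded_ribbon n v w F"
  shows "w \<le> 1 / (real n * cot (pi / real n)) \<and>
         (w = 1 / (real n * cot (pi / real n)) \<longrightarrow> equiangular n v)"
proof -
  have n0: "0 < n" using n4 by simp
  define s where "s = sgn (signed_area n v)"
  define t where "t i = turn_angle n v i" for i
  have ia: "interior_angle n v i = pi - s * t i" for i
    unfolding interior_angle_def s_def t_def ..
  have st: "0 < s * t i \<and> s * t i \<le> pi / 2" if "i < n" for i
    using angs that unfolding ia by force
  have s: "s = 1 \<or> s = -1"
  proof -
    have "s \<noteq> 0" using st[OF n0] by auto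
    then show ?thesis unfolding s_def by (auto simp: sgn_if split: if_splits)
  qed
  have ss: "s * s = 1" using s by auto
  have tnp: "turn_angle n v i \<noteq> pi" if "i < n" for i
    using st[OF that] s pi_gt_zero unfolding t_def by auto
  have nz: "v (nxt n i) \<noteq> v i" if "i < n" for i using nd that unfolding nondegenerate_ngon_def by auto
  have TS: "(\<Sum>i<n. t i) \<in> {2*pi, -2*pi}" using turn_sum[OF n4 nd tnp] unfolding t_def by simp
  have pos: "(\<Sum>i<n. s * t i) > 0" using st n0 by (intro sum_pos) auto
  have "(\<Sum>i<n. s * t i) = s * (\<Sum>i<n. t i)" by (simp add: sum_distrib_left)
  then have S2: "(\<Sum>i<n. s * t i) = 2 * pi" using TS s pos by auto
  define \<beta> where "\<beta> i = s * t i / 2" for i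
  have tb: "turn_angle n v i = 2 * s * \<beta> i" for i
    unfolding \<beta>_def t_def[symmetric] using ss by (simp add: algebra_simps)
  have bb: "0 < \<beta> i \<and> \<beta> i \<le> pi / 4" if "i < n" for i using st[OF that] unfolding \<beta>_def by simp
  have bb2: "0 < \<beta> i" "\<beta> i < pi / 2" if "i < n" for i using bb[OF that] pi_gt_zero by auto
  have Sb: "(\<Sum>i<n. \<beta> i) = pi" unfolding \<beta>_def using S2 by (simp add: sum_divide_distrib[symmetric])
  define C where "C i = cot (\<beta> i)" for i
  define l where "l i = cmod (v (nxt n i) - v i)" for i
  have fold: "w * (C i + C (nxt n i)) \<le> 2 * l i" if i: "i < n" for i
  proof -
    have ni: "nxt n i < n" using nxt_lt[OF n0] .
    have nz0: "v i \<noteq> v (prv n i)" using nz[OF prv_lt[OF n0, of i]] nxt_prv[OF n0 i] by metis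
    show ?thesis unfolding C_def l_def
      by (rule fold_ineq[OF fr i nz[OF i] nz0 nz[OF ni] s tb bb2[OF i] tb bb2[OF ni]])
  qed
  have sumfold: "(\<Sum>i<n. w * (C i + C (nxt n i))) \<le> (\<Sum>i<n. 2 * l i)"
    using fold by (intro sum_mono) auto
  have rC: "(\<Sum>i<n. C (nxt n i)) = (\<Sum>i<n. C i)"
    unfolding nxt_def using reindex_mod[of C 1 n] by simp
  have "(\<Sum>i<n. w * (C i + C (nxt n i))) = 2 * w * (\<Sum>i<n. C i)"
    by (simp add: sum_distrib_left[symmetric] sum.distrib rC)
  moreover have "(\<Sum>i<n. 2 * l i) = 2" using len unfolding polygon_length_def l_def
    by (simp add: sum_distrib_left[symmetric])
  ultimately have wC: "w * (\<Sum>i<n. C i) \<le> 1" using sumfold by simp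
  define a where "a = pi / real n"
  have a: "0 < a" "a < pi / 2" using n4 pi_gt_zero unfolding a_def by (auto simp: field_simps)
  have na: "real n * a = pi" using n0 by (simp add: a_def)
  have ca: "cot a > 0" using a cot_gt_zero by auto
  define g where "g i = cot a - (\<beta> i - a) / (sin a)^2" for i
  have gC: "g i \<le> C i" if "i < n" for i
  proof (cases "\<beta> i = a")
    case True then show ?thesis by (simp add: g_def C_def)
  next
    case False
    then show ?thesis using cot_tangent[OF a bb2[OF that] False] by (simp add: g_def C_def)
  qed
  have gC': "g i < C i" if "i < n" "\<beta> i \<noteq> a" for i
    using cot_tangent[OF a bb2[OF that(1)] that(2)] by (simp add: g_def C_def)
  have sg: "(\<Sum>i<n. g i) = real n * cot a"
  proof -
    have "(\<Sum>i<n. g i) = real n * cot a - (\<Sum>i<n. \<beta> i - a) / (sin a)^2"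
      unfolding g_def by (simp add: sum_subtractf sum_divide_distrib[symmetric])
    also have "(\<Sum>i<n. \<beta> i - a) = 0" using Sb na by (simp add: sum_subtractf)
    finally show ?thesis by simp
  qed
  have SC: "real n * cot a \<le> (\<Sum>i<n. C i)" using sg gC by (metis lessThan_iff sum_mono)
  have pcot: "0 < real n * cot a" using ca n0 by simp
  have SCp: "0 < (\<Sum>i<n. C i)" using SC pcot by linarith
  have w1: "w \<le> 1 / (\<Sum>i<n. C i)" using wC SCp by (simp add: field_simps)
  have w2: "1 / (\<Sum>i<n. C i) \<le> 1 / (real n * cot a)" using SC pcot by (simp add: frac_le)
  have part_a: "w \<le> 1 / (real n * cot a)" using w1 w2 by linarith
  have part_b: "equiangular n v" if weq: "w = 1 / (real n * cot a)"
  proof -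
    have le: "(\<Sum>i<n. C i) \<le> real n * cot a" using wC pcot unfolding weq by (simp add: field_simps)
    have allb: "\<beta> i = a" if "i < n" for i
    proof (rule ccontr)
      assume ne: "\<beta> i \<noteq> a"
      have "(\<Sum>i<n. g i) < (\<Sum>i<n. C i)"
        by (rule sum_strict_mono_ex1) (use gC gC' that ne in auto)
      then show False using sg le by simp
    qed
    have "interior_angle n v i = pi - 2 * a" if "i < n" for i
      unfolding ia using allb[OF that] unfolding \<beta>_def by simp
    then show ?thesis unfolding equiangular_def by simp
  qed
  show ?thesis using part_a part_b unfolding a_def by simp
qed


lemma cis_period: "cis (x + 2 * pi * real m) = cis x"
proof -
  have "cis (2 * pi * real m) = 1" by (rule cis_multiple_2pi) simp
  then show ?thesis by (simp add: cis_mult[symmetric])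
qed

lemma cis_minus_sub: "cis a - cis (- a) = \<i> * of_real (2 * sin a)"
  by (simp add: complex_eq_iff cis.ctr)

definition th :: "nat \<Rightarrow> real" where "th n = pi / real n"
definition rr :: "nat \<Rightarrow> real" where "rr n = 1 / (2 * real n * sin (th n))"
definition vr :: "nat \<Rightarrow> nat \<Rightarrow> complex" where "vr n k = of_real (rr n) * cis (2 * real k * th n)"

context
  fixes n :: nat
  assumes n4: "4 \<le> n"
begin

lemma n0: "0 < n" using n4 by simp

lemma th_pos: "0 < th n" and th_le: "th n \<le> pi / 4"
  using n4 pi_gt_zero by (auto simp: th_def field_simps)

lemma sin_th: "0 < sin (th n)" using th_pos th_le pi_gt_zero by (intro sin_gt_zero) auto
lemma cos_th: "0 < cos (th n)" using th_pos th_le pi_gt_zero by (intro cos_gt_zero) auto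
lemma rr_pos: "0 < rr n" using sin_th n0 by (simp add: rr_def)
lemma nth: "real n * th n = pi" using n0 by (simp add: th_def)

lemma vr_add_n: "vr n (k + n * q) = vr n k"
proof -
  have "2 * real (k + n * q) * th n = 2 * real k * th n + 2 * pi * real q"
    using nth by (simp add: algebra_simps)
  then show ?thesis unfolding vr_def by (simp add: cis_period)
qed

lemma vr_mod: "vr n (k mod n) = vr n k"
  using vr_add_n[of "k mod n" "k div n"] by simp

lemma vr_nxt: "vr n (nxt n i) = vr n (Suc i)"
  unfolding nxt_def by (rule vr_mod)

lemma vr_prv: "vr n (prv n i) = vr n (i + n - 1)"
  unfolding prv_def by (rule vr_mod)

lemma vr_n: "vr n (i + n) = vr n i"
  using vr_add_n[of i 1] by simp

definition cc where "cc = 2 * rr n * sin (th n)"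

lemma cc_pos: "0 < cc" using rr_pos sin_th by (simp add: cc_def)
lemma cc_val: "cc = 1 / real n" using sin_th n0 by (simp add: cc_def rr_def)

lemma edge: "vr n (Suc k) - vr n k = of_real cc * (\<i> * cis ((2 * real k + 1) * th n))"
proof -
  have "cis (2 * real (Suc k) * th n) = cis ((2 * real k + 1) * th n) * cis (th n)"
    by (simp add: cis_mult algebra_simps)
  moreover have "cis (2 * real k * th n) = cis ((2 * real k + 1) * th n) * cis (- th n)"
    by (simp add: cis_mult algebra_simps)
  ultimately have "vr n (Suc k) - vr n k = of_real (rr n) * cis ((2 * real k + 1) * th n) * (cis (th n) - cis (- th n))"
    unfolding vr_def by (simp add: algebra_simps)
  then show ?thesis unfolding cis_minus_sub cc_def by (simp add: algebra_simps)
qed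

lemma edge_norm: "cmod (vr n (Suc k) - vr n k) = cc"
  unfolding edge using cc_pos by (simp add: norm_mult)

lemma len: "polygon_length n (vr n) = 1"
  unfolding polygon_length_def vr_nxt edge_norm cc_val using n0 by simp

lemma edir: "edge_dir n (vr n) i = \<i> * cis ((2 * real i + 1) * th n)"
  unfolding edge_dir_def vr_nxt edge using cc_pos
  by (simp add: sgn_mult sgn_of_real norm_mult sgn_eq)

lemma prv_edge: "vr n i - vr n (prv n i) = of_real cc * (\<i> * cis ((2 * real i + 2 * real n - 1) * th n))"
proof -
  have "vr n i - vr n (prv n i) = vr n (Suc (i + n - 1)) - vr n (i + n - 1)"
    unfolding vr_prv using n0 vr_n by simp
  also have "\<dots> = of_real cc * (\<i> * cis ((2 * real (i + n - 1) + 1) * th n))" by (rule edge)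
  also have "real (i + n - 1) = real i + real n - 1" using n0 by (simp add: of_nat_diff)
  finally show ?thesis by (simp add: algebra_simps)
qed

lemma turn: "turn_angle n (vr n) i = 2 * th n"
proof -
  have c0: "of_real cc * \<i> \<noteq> (0::complex)" using cc_pos by simp
  have "(vr n (nxt n i) - vr n i) / (vr n i - vr n (prv n i))
     = cis ((2 * real i + 1) * th n) / cis ((2 * real i + 2 * real n - 1) * th n)"
    unfolding vr_nxt edge prv_edge using c0 by (simp add: field_simps)
  also have "\<dots> = cis (2 * th n - 2 * pi)"
  proof -
    have "(2 * real i + 1) * th n - (2 * real i + 2 * real n - 1) * th n = 2 * th n - 2 * (real n * th n)"
      by (simp add: algebra_simps)
    then show ?thesis unfolding cis_divide nth by simp
  qed
  also have "\<dots> = cis (2 * th n)" using cis_period[of "2 * th n - 2 * pi" 1] by simp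
  finally have "turn_angle n (vr n) i = Arg (cis (2 * th n))" unfolding turn_angle_def by simp
  also have "\<dots> = 2 * th n" using th_pos th_le pi_gt_zero by (intro Arg_cis) auto
  finally show ?thesis .
qed

lemma area: "0 < signed_area n (vr n)"
proof -
  have "Im (cnj (vr n i) * vr n (nxt n i)) = (rr n)^2 * sin (2 * th n)" for i
  proof -
    have "cnj (vr n i) * vr n (nxt n i) = of_real ((rr n)^2) * (cis (- (2 * real i * th n)) * cis (2 * real (Suc i) * th n))"
      unfolding vr_nxt unfolding vr_def by (simp add: cis_cnj power2_eq_square algebra_simps)
    also have "cis (- (2 * real i * th n)) * cis (2 * real (Suc i) * th n) = cis (2 * th n)"
      by (simp add: cis_mult algebra_simps)
    finally show ?thesis by simp
  qed
  moreover have "0 < sin (2 * th n)" using th_pos th_le pi_gt_zero by (intro sin_gt_zero) auto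
  ultimately show ?thesis unfolding signed_area_def using rr_pos n0 by simp
qed

lemma iangle: "interior_angle n (vr n) i = pi - 2 * th n"
  unfolding interior_angle_def turn using area by simp

lemma cos_lt_th:
  assumes "3 * th n \<le> \<bar>x\<bar>" "\<bar>x\<bar> \<le> 2 * pi - 3 * th n"
  shows "cos x < cos (th n)"
proof -
  define y where "y = \<bar>x\<bar>"
  have cy: "cos y = cos x" unfolding y_def by simp
  have t: "0 < th n" "th n \<le> pi/4" using th_pos th_le by auto
  show ?thesis
  proof (cases "y \<le> pi")
    case True
    have "cos y < cos (th n)" using t assms True unfolding y_def[symmetric]
      by (intro cos_monotone_0_pi) auto
    then show ?thesis using cy by simp
  next
    case False
    have "cos (2 * pi - y) < cos (th n)" using t assms False unfolding y_def[symmetric]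
      by (intro cos_monotone_0_pi) auto
    then show ?thesis using cy by (simp add: cos_2pi_minus)
  qed
qed

definition FF where "FF i z = Re (z * cnj (cis ((2 * real i + 1) * th n)))"

lemma FF_vr: "FF i (vr n k) = rr n * cos ((2 * real k - 2 * real i - 1) * th n)"
proof -
  have "vr n k * cnj (cis ((2 * real i + 1) * th n)) = of_real (rr n) * cis ((2 * real k - 2 * real i - 1) * th n)"
    unfolding vr_def by (simp add: cis_cnj mult.assoc cis_mult algebra_simps)
  then show ?thesis unfolding FF_def by simp
qed

lemma FF_ends: "FF i (vr n i) = rr n * cos (th n)" "FF i (vr n (nxt n i)) = rr n * cos (th n)"
  unfolding vr_nxt FF_vr by (simp_all add: algebra_simps)

lemma nxt_inj: "i < n \<Longrightarrow> j < n \<Longrightarrow> nxt n i = nxt n j \<Longrightarrow> i = j"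
  unfolding nxt_def using modc[of i 1 n j] by simp

lemma nxt_nxt: "i < n \<Longrightarrow> nxt n (nxt n i) \<noteq> i"
proof
  assume i: "i < n" and h: "nxt n (nxt n i) = i"
  have "nxt n (nxt n i) = (i + 2) mod n" unfolding nxt_def by (simp add: mod_Suc_eq)
  then have "(i + 2) mod n = (i + 0) mod n" using h i by simp
  then have "(2 + i) mod n = (0 + i) mod n" by (simp add: add.commute)
  then show False using modc[of 2 i n 0] n4 by simp
qed

lemma FF_lt:
  assumes k: "k < n" and i: "i < n" and ki: "k \<noteq> i" "k \<noteq> nxt n i"
  shows "FF i (vr n k) < rr n * cos (th n)"
proof -
  define D where "D = real k - real i"
  have x: "(2 * real k - 2 * real i - 1) * th n = (2 * D - 1) * th n" by (simp add: D_def)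
  have bounds: "3 * th n \<le> \<bar>(2 * D - 1) * th n\<bar> \<and> \<bar>(2 * D - 1) * th n\<bar> \<le> 2 * pi - 3 * th n"
  proof (cases "i < k")
    case True
    have "Suc i < n" using True k by simp
    then have "nxt n i = Suc i" unfolding nxt_def by simp
    then have "i + 2 \<le> k" using True ki by simp
    then have D: "2 \<le> D" "D \<le> real n - 1" using k unfolding D_def by linarith+
    have "3 * th n \<le> (2 * D - 1) * th n" using D th_pos by (intro mult_right_mono) auto
    moreover have "(2 * D - 1) * th n \<le> (2 * real n - 3) * th n" using D th_pos by (intro mult_right_mono) auto
    moreover have "(2 * real n - 3) * th n = 2 * pi - 3 * th n" using nth by (simp add: algebra_simps)
    moreover have "0 \<le> (2 * D - 1) * th n" using D th_pos by simp
    ultimately show ?thesis by simp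
  next
    case False
    then have ik: "k < i" using ki by simp
    have "\<not> (k = 0 \<and> i = n - 1)"
    proof
      assume "k = 0 \<and> i = n - 1"
      then have "nxt n i = k" unfolding nxt_def using n0 by simp
      then show False using ki by simp
    qed
    then have D: "D \<le> -1" "- (real n - 2) \<le> D" using ik i unfolding D_def by linarith+
    have "3 * th n \<le> (1 - 2 * D) * th n" using D th_pos by (intro mult_right_mono) auto
    moreover have "(1 - 2 * D) * th n \<le> (2 * real n - 3) * th n" using D th_pos by (intro mult_right_mono) auto
    moreover have "(2 * real n - 3) * th n = 2 * pi - 3 * th n" using nth by (simp add: algebra_simps)
    moreover have "\<bar>(2 * D - 1) * th n\<bar> = (1 - 2 * D) * th n" using D th_pos
      by (simp add: abs_mult)
    ultimately show ?thesis by simp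
  qed
  have "cos ((2 * D - 1) * th n) < cos (th n)" using bounds cos_lt_th by blast
  then show ?thesis unfolding FF_vr x using rr_pos by simp
qed

lemma FF_seg:
  assumes "z \<in> closed_segment a b"
  obtains u where "0 \<le> u" "u \<le> 1" "z = (1 - u) *\<^sub>R a + u *\<^sub>R b"
    "FF i z = (1 - u) * FF i a + u * FF i b"
proof -
  obtain u where u: "0 \<le> u" "u \<le> 1" "z = (1 - u) *\<^sub>R a + u *\<^sub>R b"
    using assms unfolding in_segment by auto
  have "FF i z = (1 - u) * FF i a + u * FF i b"
    unfolding FF_def u(3) scaleR_conv_of_real by (simp add: algebra_simps)
  then show ?thesis using that u by blast
qed

lemma FF_on_seg: "i < n \<Longrightarrow> z \<in> edge_seg n (vr n) i \<Longrightarrow> FF i z = rr n * cos (th n)"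
proof -
  assume "z \<in> edge_seg n (vr n) i"
  then obtain u where "FF i z = (1 - u) * FF i (vr n i) + u * FF i (vr n (nxt n i))"
    using FF_seg[of z "vr n i" "vr n (nxt n i)" i] unfolding edge_seg_def by blast
  then show ?thesis by (simp add: FF_ends algebra_simps)
qed

lemma reg_adj:
  assumes i: "i < n" and j: "j = nxt n i"
  shows "edge_seg n (vr n) i \<inter> edge_seg n (vr n) j = {vr n j}"
proof
  show "{vr n j} \<subseteq> edge_seg n (vr n) i \<inter> edge_seg n (vr n) j"
    unfolding edge_seg_def j by auto
next
  have jn: "j < n" using j nxt_lt[OF n0] by simp
  have ne1: "nxt n j \<noteq> i" using nxt_nxt[OF i] j by simp
  have ne2: "nxt n j \<noteq> nxt n i"
  proof
    assume "nxt n j = nxt n i"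
    then have "j = i" using nxt_inj[OF jn i] by simp
    then show False using j nxt_nxt[OF i] by (metis)
  qed
  have lt: "FF i (vr n (nxt n j)) < rr n * cos (th n)"
    using FF_lt[OF nxt_lt[OF n0] i ne1 ne2] .
  show "edge_seg n (vr n) i \<inter> edge_seg n (vr n) j \<subseteq> {vr n j}"
  proof
    fix z assume z: "z \<in> edge_seg n (vr n) i \<inter> edge_seg n (vr n) j"
    then have Fz: "FF i z = rr n * cos (th n)" using FF_on_seg[OF i] by blast
    obtain u where u: "0 \<le> u" "u \<le> 1" "z = (1 - u) *\<^sub>R vr n j + u *\<^sub>R vr n (nxt n j)"
      "FF i z = (1 - u) * FF i (vr n j) + u * FF i (vr n (nxt n j))"
      using z FF_seg[of z "vr n j" "vr n (nxt n j)" i] unfolding edge_seg_def by blast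
    have Fj: "FF i (vr n j) = rr n * cos (th n)" using FF_ends(2) j by simp
    have "u * (FF i (vr n (nxt n j)) - rr n * cos (th n)) = 0"
      using u(4) Fz Fj by (simp only: algebra_simps)
    then have "u = 0" using lt by simp
    then show "z \<in> {vr n j}" using u(3) by simp
  qed
qed

lemma reg_simple: "simple_polygon n (vr n)"
  unfolding simple_polygon_def
proof (intro conjI allI impI)
  show "3 \<le> n" using n4 by simp
  fix i j assume i: "i < n" and j: "j < n" and ij: "i \<noteq> j"
  show "if j = nxt n i then edge_seg n (vr n) i \<inter> edge_seg n (vr n) j = {vr n j}
        else if i = nxt n j then edge_seg n (vr n) i \<inter> edge_seg n (vr n) j = {vr n i}
        else edge_seg n (vr n) i \<inter> edge_seg n (vr n) j = {}"
  proof (cases "j = nxt n i")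
    case True then show ?thesis using reg_adj[OF i True] by simp
  next
    case False
    show ?thesis
    proof (cases "i = nxt n j")
      case True then show ?thesis using reg_adj[OF j True] False by (simp add: Int_commute)
    next
      case False2: False
      have ne2: "nxt n j \<noteq> nxt n i" using nxt_inj[OF j i] ij by auto
      have l1: "FF i (vr n j) < rr n * cos (th n)" using FF_lt[OF j i] ij False by auto
      have l2: "FF i (vr n (nxt n j)) < rr n * cos (th n)"
        using FF_lt[OF nxt_lt[OF n0] i] False2 ne2 by auto
      have "z \<notin> edge_seg n (vr n) i" if z: "z \<in> edge_seg n (vr n) j" for z
      proof -
        obtain u where u: "0 \<le> u" "u \<le> 1"
          "FF i z = (1 - u) * FF i (vr n j) + u * FF i (vr n (nxt n j))"
          using z FF_seg[of z "vr n j" "vr n (nxt n j)" i] unfolding edge_seg_def by blast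
        have "(1 - u) * FF i (vr n j) \<le> (1 - u) * (rr n * cos (th n))"
          using l1 u by (intro mult_left_mono) auto
        moreover have "u * FF i (vr n (nxt n j)) \<le> u * (rr n * cos (th n))"
          using l2 u by (intro mult_left_mono) auto
        moreover have "(1 - u) * FF i (vr n j) < (1 - u) * (rr n * cos (th n)) \<or>
                       u * FF i (vr n (nxt n j)) < u * (rr n * cos (th n))"
          using l1 l2 u by (cases "u = 1") auto
        ultimately have "FF i z < rr n * cos (th n)" using u(3) by (simp add: algebra_simps) linarith
        then show ?thesis using FF_on_seg[OF i] by force
      qed
      then show ?thesis using False False2 by auto
    qed
  qed
qed

lemma vr_Suc_mod: "vr n (Suc (k mod n)) = vr n (Suc k)"
  by (metis mod_Suc_eq vr_mod)

lemma reg_ribbon: "folded_ribbon n (vr n) (1 / (real n * cot (pi / real n))) F"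
  unfolding folded_ribbon_def
proof (intro conjI allI impI)
  have ct: "0 < cot (th n)" using th_pos th_le pi_gt_zero by (intro cot_gt_zero) auto
  then show "0 < 1 / (real n * cot (pi / real n))" using n0 by (simp add: th_def)
  fix i assume i: "i < n"
  define t where "t = th n"
  define C where "C = cis ((2 * real i + 1) * t)"
  define P where "P = cis t"
  define r where "r = rr n"
  have CC: "C * cnj C = 1" unfolding C_def by (simp add: cis_cnj cis_mult)
  have PP: "P * cnj P = 1" unfolding P_def by (simp add: cis_cnj cis_mult)
  have S: "of_real (2 * sin t) = - \<i> * (P - cnj P)" unfolding P_def by (simp add: complex_eq_iff)
  have ii: "\<i> * \<i> = (-1::complex)" by simp
  have v1: "vr n i = of_real r * C * cnj P"
    unfolding vr_def C_def P_def r_def t_def by (simp add: cis_cnj mult.assoc cis_mult algebra_simps)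
  have v2: "vr n (nxt n i) = of_real r * C * P"
    unfolding vr_nxt unfolding vr_def C_def P_def r_def t_def by (simp add: mult.assoc cis_mult algebra_simps)
  have e1: "edge_dir n (vr n) i = \<i> * C" unfolding edir C_def t_def ..
  have e0: "edge_dir n (vr n) (prv n i) = \<i> * C * cnj P * cnj P"
  proof -
    have "edge_dir n (vr n) (prv n i) = sgn (vr n i - vr n (prv n i))"
      unfolding edge_dir_def nxt_prv[OF n0 i] ..
    also have "\<dots> = \<i> * cis ((2 * real i + 2 * real n - 1) * th n)"
      unfolding prv_edge using cc_pos by (simp add: sgn_mult sgn_of_real norm_mult sgn_eq)
    also have "(2 * real i + 2 * real n - 1) * th n = ((2 * real i + 1) * t - t - t) + 2 * pi * real 1"
      using nth unfolding t_def by (simp add: algebra_simps)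
    also have "cis \<dots> = C * cnj P * cnj P" unfolding cis_period C_def P_def
      by (simp add: cis_cnj mult.assoc cis_mult algebra_simps)
    finally show ?thesis by (simp add: mult.assoc)
  qed
  have e2: "edge_dir n (vr n) (nxt n i) = \<i> * C * P * P"
  proof -
    have "edge_dir n (vr n) (nxt n i) = sgn (vr n (Suc (Suc i)) - vr n (Suc i))"
    proof -
      have a: "vr n (Suc (Suc i mod n) mod n) = vr n (Suc (Suc i))" using vr_mod vr_Suc_mod by metis
      have b: "vr n (Suc i mod n) = vr n (Suc i)" using vr_mod by metis
      show ?thesis unfolding edge_dir_def nxt_def a b ..
    qed
    also have "\<dots> = \<i> * cis ((2 * real (Suc i) + 1) * th n)"
      unfolding edge using cc_pos by (simp add: sgn_mult sgn_of_real norm_mult sgn_eq)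
    also have "cis ((2 * real (Suc i) + 1) * th n) = C * P * P" unfolding C_def P_def t_def
      by (simp add: mult.assoc cis_mult algebra_simps)
    finally show ?thesis by (simp add: mult.assoc)
  qed
  have e3: "edge_dir n (vr n) (prv n (nxt n i)) = \<i> * C" using e1 prv_nxt[OF n0 i] by simp
  show "fold_line n (vr n) i \<inter> fold_line n (vr n) (nxt n i) \<inter>
        ribbon_strip n (vr n) (1 / (real n * cot (pi / real n))) i = {}"
  proof (rule ccontr)
    assume "\<not> ?thesis"
    then obtain z where z1: "z \<in> fold_line n (vr n) i" and z2: "z \<in> fold_line n (vr n) (nxt n i)"
      and z3: "z \<in> ribbon_strip n (vr n) (1 / (real n * cot (pi / real n))) i" by blast
    define y where "y = z * cnj C"
    have zy: "z = y * C" using CC unfolding y_def by (simp add: mult.assoc mult.commute)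
    have sn: "sin t > 0" using sin_th unfolding t_def .
    have f1: "(z - vr n i) * cnj (edge_dir n (vr n) i - edge_dir n (vr n) (prv n i))
        = (y - of_real r * cnj P) * P * (- of_real (2 * sin t))"
      unfolding v1 e1 e0 S using CC PP zy ii by simp algebra
    have f2: "(z - vr n (nxt n i)) * cnj (edge_dir n (vr n) (nxt n i) - edge_dir n (vr n) (prv n (nxt n i)))
        = (y - of_real r * P) * cnj P * (- of_real (2 * sin t))"
      unfolding v2 e2 e3 S using CC PP zy ii by simp algebra
    have f3: "(z - vr n i) * cnj (edge_dir n (vr n) i) = (y - of_real r * cnj P) * (- \<i>)"
      unfolding v1 e1 using CC PP zy ii by simp algebra
    have r1: "Re ((y - of_real r * cnj P) * P) = 0"
    proof -
      define A where "A = (y - of_real r * cnj P) * P"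
      have "Re ((z - vr n i) * cnj (edge_dir n (vr n) i - edge_dir n (vr n) (prv n i))) = 0"
        using z1 unfolding fold_line_def by simp
      then have "Re (A * (- of_real (2 * sin t))) = 0" unfolding f1 A_def .
      then have "Re A * (2 * sin t) = 0" by simp
      then show ?thesis using sn unfolding A_def by simp
    qed
    have r2: "Re ((y - of_real r * P) * cnj P) = 0"
    proof -
      define A where "A = (y - of_real r * P) * cnj P"
      have "Re ((z - vr n (nxt n i)) * cnj (edge_dir n (vr n) (nxt n i) - edge_dir n (vr n) (prv n (nxt n i)))) = 0"
        using z2 unfolding fold_line_def by simp
      then have "Re (A * (- of_real (2 * sin t))) = 0" unfolding f2 A_def .
      then have "Re A * (2 * sin t) = 0" by simp
      then show ?thesis using sn unfolding A_def by simp
    qed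
    have sc: "r * (cos t * cos t) + r * (sin t * sin t) = r"
      using sin_cos_squared_add[of t] by (simp add: power2_eq_square distrib_left[symmetric])
    have r1': "Re y * cos t - Im y * sin t = r" using r1 sc unfolding P_def by (simp add: algebra_simps)
    have r2': "Re y * cos t + Im y * sin t = r" using r2 sc unfolding P_def by (simp add: algebra_simps)
    have ay: "Re y * cos t = r" using r1' r2' by linarith
    have st: "\<bar>Re y - r * cos t\<bar> < 1 / (real n * cot (pi / real n)) / 2"
    proof -
      define A where "A = y - of_real r * cnj P"
      have "\<bar>Im ((z - vr n i) * cnj (edge_dir n (vr n) i))\<bar> < 1 / (real n * cot (pi / real n)) / 2"
        using z3 unfolding ribbon_strip_def by simp
      then have "\<bar>Im (A * (- \<i>))\<bar> < 1 / (real n * cot (pi / real n)) / 2" unfolding f3 A_def .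
      then have "\<bar>Re A\<bar> < 1 / (real n * cot (pi / real n)) / 2" by simp
      then show ?thesis unfolding A_def P_def by simp
    qed
    have cp: "cos t > 0" using cos_th unfolding t_def .
    have "Re y - r * cos t = r * (sin t)^2 / cos t"
    proof -
      have "Re y = r / cos t" using ay cp by (simp add: field_simps)
      then show ?thesis using cp sc by (simp add: field_simps power2_eq_square)
    qed
    also have "\<dots> = 1 / (real n * cot (pi / real n)) / 2"
      unfolding r_def rr_def t_def th_def[symmetric] cot_def using sin_th cos_th n0
      by (simp add: field_simps power2_eq_square)
    moreover have "0 < real n * cot (pi / real n) * 2" using ct n0 by (simp add: th_def)
    ultimately show False using st by simp
  qed
qed

end


theorem proposition6p4:
  fixes n :: nat
  assumes "4 \<le> n"
  shows "(\<forall>(v :: nat \<Rightarrow> complex) (w :: real) (F :: nat \<Rightarrow> bool).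
            nondegenerate_ngon n v \<and> polygon_length n v = 1 \<and>
            (\<forall>i<n. pi / 2 \<le> interior_angle n v i \<and> interior_angle n v i < pi) \<and>
            folded_ribbon n v w F \<longrightarrow>
              w \<le> 1 / (real n * cot (pi / real n)) \<and>
              (w = 1 / (real n * cot (pi / real n)) \<longrightarrow> equiangular n v))
       \<and> (\<exists>(v :: nat \<Rightarrow> complex) (F :: nat \<Rightarrow> bool).
            nondegenerate_ngon n v \<and> polygon_length n v = 1 \<and>
            (\<forall>i<n. pi / 2 \<le> interior_angle n v i \<and> interior_angle n v i < pi) \<and>
            equiangular n v \<and>
            folded_ribbon n v (1 / (real n * cot (pi / real n))) F)"
proof (intro conjI allI impI)
  fix v w F
  assume h: "nondegenerate_ngon n v \<and> polygon_length n v = 1 \<and>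
            (\<forall>i<n. pi / 2 \<le> interior_angle n v i \<and> interior_angle n v i < pi) \<and>
            folded_ribbon n v w F"
  show "w \<le> 1 / (real n * cot (pi / real n))"
    using part1[OF assms] h by blast
  show "w = 1 / (real n * cot (pi / real n)) \<Longrightarrow> equiangular n v"
    using part1[OF assms] h by blast
next
  have n4: "4 \<le> n" using assms .
  have ia: "interior_angle n (vr n) i = pi - 2 * th n" for i using iangle[OF n4] .
  have t: "0 < th n" "th n \<le> pi / 4" using th_pos[OF n4] th_le[OF n4] by auto
  have nd: "nondegenerate_ngon n (vr n)"
    unfolding nondegenerate_ngon_def
  proof (intro conjI allI impI)
    show "simple_polygon n (vr n)" using reg_simple[OF n4] .
    fix i assume "i < n"
    show "vr n (nxt n i) \<noteq> vr n i"
      using edge_norm[OF n4, of i] cc_pos[OF n4] vr_nxt[OF n4, of i] by auto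
  next
    fix i assume "i < n"
    show "interior_angle n (vr n) i \<noteq> pi" using ia t by simp
  qed
  have angs: "\<forall>i<n. pi / 2 \<le> interior_angle n (vr n) i \<and> interior_angle n (vr n) i < pi"
    using ia t by auto
  have eq: "equiangular n (vr n)" unfolding equiangular_def ia by simp
  show "\<exists>(v :: nat \<Rightarrow> complex) (F :: nat \<Rightarrow> bool).
            nondegenerate_ngon n v \<and> polygon_length n v = 1 \<and>
            (\<forall>i<n. pi / 2 \<le> interior_angle n v i \<and> interior_angle n v i < pi) \<and>
            equiangular n v \<and>
            folded_ribbon n v (1 / (real n * cot (pi / real n))) F"
    using nd len[OF n4] angs eq reg_ribbon[OF n4, of "\<lambda>_. True"] by blast
qed

end
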